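(* For integers $n\ge1$ and $0\le p\le n-1$, $$s(n,n-p)=\frac{(n-1)!}{(n-p-1)!}\sum_{0\le k_1,\dots,k_p\le p}\binom{n+K-1}{K}\frac{K!}{k_1!\cdots k_p!}\,\delta_{p,\sum_{m=1}^p mk_m}\prod_{m=1}^{p}\left(\frac{-1}{(m+1)!}\right)^{k_m},\qquad K=k_1+\cdots+k_p .$$
   Context: $s(n,k)$ denotes the signed Stirling numbers of the first kind, defined by $x(x-1)\cdots(x-n+1)=\sum_{k}s(n,k)x^k$. $\delta$ is the Kronecker delta; for $p=0$ the sum is over the empty tuple and equals $1$. *)

theory Defs
  imports "HOL-Computational_Algebra.Polynomial" "HOL-Library.FuncSet" Complex_Main
begin

definition stirling1_signed :: "nat \<Rightarrow> nat \<Rightarrow> int" where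
  "stirling1_signed n k = coeff (\<Prod>i<n. [:- of_nat i, 1:]) k"

end

theory Submission
  imports Defs "HOL-Computational_Algebra.Formal_Power_Series"
begin


definition EE :: "real fps" where "EE = Abs_fps (\<lambda>m. 1 / fact (m+1))"
definition FF :: "real fps" where "FF = inverse EE"

lemma EE0: "fps_nth EE 0 = 1" by (simp add: EE_def)
lemma FF0: "fps_nth FF 0 = 1" by (simp add: FF_def EE0)
lemma EEFF: "EE * FF = 1" unfolding FF_def by (rule inverse_mult_eq_1') (simp add: EE0)

lemma EE_ode: "fps_X * fps_deriv EE = 1 - EE + fps_X * EE"
proof (rule fps_ext)
  fix p
  show "fps_nth (fps_X * fps_deriv EE) p = fps_nth (1 - EE + fps_X * EE) p"
  proof (cases p)
    case 0 then show ?thesis by (simp add: EE_def)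
  next
    case (Suc q)
    have f: "(fact (Suc q + 1)::real) = real (Suc q + 1) * fact (Suc q)" by simp
    have "real (Suc q) / fact (Suc q + 1) = 1 / fact (Suc q) - 1 / fact (Suc q + 1)"
    proof -
      have g: "\<And>A::real. A > 0 \<Longrightarrow> real (Suc q) / (real (Suc q + 1) * A) = 1 / A - 1 / (real (Suc q + 1) * A)"
      proof -
        fix A :: real assume "A > 0"
        then show "real (Suc q) / (real (Suc q + 1) * A) = 1 / A - 1 / (real (Suc q + 1) * A)"
          by (simp add: divide_simps)
      qed
      show ?thesis unfolding f by (rule g) simp
    qed
    then show ?thesis using Suc by (simp add: EE_def fps_sub_nth)
  qed
qed

lemma FF_ode: "fps_X * fps_deriv FF = FF * (1 - fps_X - FF)"
proof -
  have d: "fps_deriv FF = - fps_deriv EE * FF^2"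
    unfolding FF_def by (rule fps_inverse_deriv) (simp add: EE0)
  have "fps_X * fps_deriv FF = - ((fps_X * fps_deriv EE) * FF^2)" by (simp add: d)
  also have "\<dots> = - ((1 - EE + fps_X * EE) * FF^2)" by (simp add: EE_ode)
  also have "\<dots> = - (FF^2 - (EE*FF)*FF + fps_X * (EE * FF) * FF)"
    by (simp add: algebra_simps power2_eq_square)
  also have "\<dots> = FF * (1 - fps_X - FF)" by (simp add: EEFF algebra_simps power2_eq_square)
  finally show ?thesis .
qed

lemma FF_rec:
  assumes "n \<ge> 1"
  shows "real n * fps_nth (FF^(n+1)) p + real n * (if p = 0 then 0 else fps_nth (FF^n) (p - 1))
         = (real n - real p) * fps_nth (FF^n) p"
proof -
  have "fps_X * fps_deriv (FF^n) = fps_const (real n) * FF^(n-1) * (fps_X * fps_deriv FF)"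
    by (simp add: fps_deriv_power algebra_simps)
  also have "\<dots> = fps_const (real n) * (FF^(n-1) * FF) * (1 - fps_X - FF)"
    by (simp add: FF_ode algebra_simps)
  also have "FF^(n-1) * FF = FF^n" using assms
    by (metis Suc_diff_le diff_Suc_1 power_Suc2)
  finally have e: "fps_X * fps_deriv (FF^n) = fps_const (real n) * (FF^n - fps_X * FF^n - FF^(n+1))"
    by (simp add: algebra_simps)
  have l: "fps_nth (fps_X * fps_deriv (FF^n)) p = real p * fps_nth (FF^n) p"
    by (cases p) auto
  have "fps_nth (fps_const (real n) * (FF^n - fps_X * FF^n - FF^(n+1))) p
     = real n * (fps_nth (FF^n) p - (if p = 0 then 0 else fps_nth (FF^n) (p - 1)) - fps_nth (FF^(n+1)) p)"
    by (simp add: fps_sub_nth)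
  with e l have "real p * fps_nth (FF^n) p = real n * (fps_nth (FF^n) p - (if p = 0 then 0 else fps_nth (FF^n) (p - 1)) - fps_nth (FF^(n+1)) p)"
    by simp
  then show ?thesis by (simp add: algebra_simps)
qed



lemma stir_Suc: "(\<Prod>i<Suc n. [:- of_nat i, 1:] :: int poly) = (\<Prod>i<n. [:- of_nat i, 1:]) * [:- of_nat n, 1:]"
  by simp

lemma coeff_mult_lin_Suc: "coeff (P * [:a, 1:]) (Suc k) = a * coeff P (Suc k) + coeff P k" for P :: "int poly"
  by (simp add: mult_pCons_right algebra_simps)
lemma coeff_mult_lin_0: "coeff (P * [:a, 1:]) 0 = a * coeff P 0" for P :: "int poly"
  by (simp add: mult_pCons_right algebra_simps)

lemma stir_rec: "stirling1_signed (Suc n) (Suc k) = stirling1_signed n k - int n * stirling1_signed n (Suc k)"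
  unfolding stirling1_signed_def stir_Suc coeff_mult_lin_Suc by simp

lemma stir_rec0: "stirling1_signed (Suc n) 0 = - int n * stirling1_signed n 0"
  unfolding stirling1_signed_def stir_Suc coeff_mult_lin_0 by simp

lemma stir_big: "k > n \<Longrightarrow> stirling1_signed n k = 0"
proof (induction n arbitrary: k)
  case 0 then show ?case by (simp add: stirling1_signed_def)
next
  case (Suc n)
  then obtain j where "k = Suc j" "j > n" by (cases k) auto
  then show ?case using Suc by (simp add: stir_rec)
qed

lemma stir_diag: "stirling1_signed n n = 1"
proof (induction n)
  case 0 then show ?case by (simp add: stirling1_signed_def)
next
  case (Suc n) then show ?case by (simp add: stir_rec stir_big)
qed

definition QQ :: "nat \<Rightarrow> nat \<Rightarrow> real" where
  "QQ n p = (\<Prod>i<p. real n - 1 - real i) * fps_nth (FF^n) p"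

lemma FFpow0: "fps_nth (FF^n) 0 = 1"
  by (simp add: fps_nth_power_0 FF0)

lemma stir_QQ: "n \<ge> 1 \<Longrightarrow> p \<le> n \<Longrightarrow> real_of_int (stirling1_signed n (n - p)) = QQ n p"
proof (induction n arbitrary: p rule: nat_induct_at_least)
  case base
  then consider "p = 0" | "p = 1" by linarith
  then show ?case
  proof cases
    case 1 then show ?thesis by (simp add: QQ_def stir_diag FF0)
  next
    case 2 then show ?thesis by (simp add: QQ_def stirling1_signed_def)
  qed
next
  case (Suc n)
  consider "p = 0" | "p = Suc n" | q where "p = Suc q" "q < n" using Suc.prems
  proof -
    have "p = 0 \<or> p = Suc n \<or> (\<exists>q. p = Suc q \<and> q < n)" using Suc.prems by (cases p) auto
    then show ?thesis using that by blast
  qed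
  then show ?case
  proof cases
    case 1 then show ?thesis by (simp add: QQ_def stir_diag FFpow0 FF0)
  next
    case 2
    have z1: "QQ (Suc n) (Suc n) = 0" unfolding QQ_def
      by (simp add: prod_zero_iff)
    have "real_of_int (stirling1_signed n (n - n)) = QQ n n" using Suc.IH[of n] by simp
    moreover have "QQ n n = 0" unfolding QQ_def using Suc.hyps
      by (simp add: prod_zero_iff) (rule disjI1, rule bexI[where x = "n - 1"], auto)
    ultimately have "stirling1_signed n 0 = 0" by simp
    then show ?thesis using 2 z1 by (simp add: stir_rec0)
  next
    case 3
    define pi where "pi = (\<Prod>i<q. real n - 1 - real i)"
    have h1: "real_of_int (stirling1_signed n (n - p)) = QQ n p" using Suc 3 by simp
    have h2: "real_of_int (stirling1_signed n (n - q)) = QQ n q" using Suc 3 by simp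
    have e: "Suc n - p = Suc (n - p)" "Suc (n - p) = n - q" using 3 by auto
    have r: "real n * fps_nth (FF^(n+1)) p + real n * fps_nth (FF^n) q = (real n - real p) * fps_nth (FF^n) p"
      using FF_rec[OF Suc.hyps, of p] 3 by simp
    have q1: "QQ (Suc n) p = real n * pi * fps_nth (FF^(n+1)) p"
      unfolding QQ_def pi_def 3 prod.lessThan_Suc_shift by (simp add: diff_diff_eq)
    have q2: "QQ n p = pi * (real n - real p) * fps_nth (FF^n) p"
      unfolding QQ_def pi_def 3 prod.lessThan_Suc by (simp add: algebra_simps)
    have q3: "QQ n q = pi * fps_nth (FF^n) q"
      unfolding QQ_def pi_def by simp
    have "stirling1_signed (Suc n) (Suc n - p) = stirling1_signed n (n - p) - int n * stirling1_signed n (n - q)"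
      using stir_rec[of n "n - p"] unfolding e(1) by (simp only: e(2))
    then have "real_of_int (stirling1_signed (Suc n) (Suc n - p)) = QQ n p - real n * QQ n q"
      by (simp only: of_int_diff of_int_mult h1 h2 of_int_of_nat_eq)
    also have "\<dots> = pi * ((real n - real p) * fps_nth (FF^n) p - real n * fps_nth (FF^n) q)"
      unfolding q2 q3 by (simp add: algebra_simps)
    also have "\<dots> = QQ (Suc n) p" unfolding q1 r[symmetric] by (simp add: algebra_simps)
    finally show ?thesis .
  qed
qed



lemma pow_nth_zero: "fps_nth z 0 = 0 \<Longrightarrow> i < r \<Longrightarrow> fps_nth (z ^ r) i = (0::real)"
proof (induction r arbitrary: i)
  case 0 then show ?case by simp
next
  case (Suc r)
  have "fps_nth (z ^ Suc r) i = (\<Sum>k=0..i. fps_nth z k * fps_nth (z^r) (i - k))"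
    by (simp add: fps_mult_nth)
  also have "\<dots> = 0"
  proof (rule sum.neutral, intro ballI)
    fix k assume k: "k \<in> {0..i}"
    show "fps_nth z k * fps_nth (z^r) (i - k) = 0"
    proof (cases "k = 0")
      case True then show ?thesis using Suc.prems by simp
    next
      case False then show ?thesis using Suc k by simp
    qed
  qed
  finally show ?case .
qed

lemma NB:
  fixes z :: "real fps"
  assumes z0: "fps_nth z 0 = 0"
  shows "fps_nth (inverse (1 - z) ^ n) q = (\<Sum>i=0..q. pochhammer (real n) i / fact i * fps_nth (z^i) q)"
proof -
  have c0: "fps_nth (-z) 0 = 0" using z0 by simp
  have oz: "(1 - z) = (1 + fps_X) oo (-z)"
    using c0 by (simp add: fps_compose_add_distrib)
  have "inverse (1 - z) ^ n = inverse ((1 - z) ^ n)" by (simp add: fps_inverse_power)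
  also have "\<dots> = inverse (((1 + fps_X) oo (-z)) ^ n)" by (simp only: oz)
  also have "((1 + fps_X) oo (-z)) ^ n = (1 + fps_X)^n oo (-z)"
    by (rule fps_compose_power[OF c0])
  also have "inverse ((1 + fps_X)^n oo (-z)) = inverse ((1 + fps_X :: real fps)^n) oo (-z)"
    by (rule fps_inverse_compose[symmetric, OF c0]) (simp add: fps_nth_power_0)
  also have "inverse ((1 + fps_X :: real fps)^n) = fps_binomial (- of_nat n)"
    by (rule fps_binomial_minus_of_nat[symmetric])
  finally have e: "inverse (1 - z) ^ n = fps_binomial (- of_nat n) oo (-z)" .
  show ?thesis unfolding e fps_compose_nth fps_binomial_nth
  proof (rule sum.cong[OF refl])
    fix i
    have "fps_nth ((-z)^i) q = (-1)^i * fps_nth (z^i) q"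
      unfolding power_minus[of z] by (cases "even i") (simp_all add: fps_neg_nth)
    then show "(- real n gchoose i) * fps_nth ((-z)^i) q = pochhammer (real n) i / fact i * fps_nth (z^i) q"
      by (simp add: gbinomial_pochhammer power_mult_distrib[symmetric])
  qed
qed

lemma NB':
  fixes z :: "real fps"
  assumes z0: "fps_nth z 0 = 0" and "q \<le> N"
  shows "fps_nth (inverse (1 - z) ^ n) q = (\<Sum>i=0..N. pochhammer (real n) i / fact i * fps_nth (z^i) q)"
  unfolding NB[OF z0]
  by (rule sum.mono_neutral_left) (use assms pow_nth_zero[OF z0] in auto)

lemma FL:
  fixes h :: "real fps"
  assumes h0: "fps_nth h 0 = 0" and j: "j \<ge> 1" and pN: "p \<le> N"
  shows "fps_nth (inverse (1 - h - fps_const c * fps_X^j) ^ n) p =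
    (\<Sum>r=0..N. pochhammer (real n) r / fact r * c^r *
        (if j*r \<le> p then fps_nth (inverse (1-h) ^ (n+r)) (p - j*r) else 0))"
proof -
  define w where "w = inverse (1 - h)"
  define y where "y = fps_const c * fps_X^j"
  define z where "z = y * w"
  have y0: "fps_nth y 0 = 0" using j unfolding y_def by simp
  have z0: "fps_nth z 0 = 0" unfolding z_def using y0 by (simp add: fps_mult_nth)
  have hw: "(1 - h) * w = 1" unfolding w_def by (rule inverse_mult_eq_1') (simp add: h0)
  have "1 - h - y = (1 - h) * (1 - z)"
  proof -
    have "(1 - h) * (1 - z) = (1 - h) - y * ((1 - h) * w)" unfolding z_def by (simp add: algebra_simps)
    then show ?thesis using hw by simp
  qed
  then have "inverse (1 - h - y) ^ n = w^n * inverse (1 - z) ^ n"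
    by (simp add: fps_inverse_mult w_def power_mult_distrib)
  then have "fps_nth (inverse (1 - h - y) ^ n) p = (\<Sum>i=0..p. fps_nth (w^n) i * fps_nth (inverse (1 - z) ^ n) (p - i))"
    by (simp add: fps_mult_nth)
  also have "\<dots> = (\<Sum>i=0..p. fps_nth (w^n) i * (\<Sum>r=0..N. pochhammer (real n) r / fact r * fps_nth (z^r) (p - i)))"
  proof (rule sum.cong[OF refl])
    fix i assume "i \<in> {0..p}"
    then have "p - i \<le> N" using pN by simp
    then show "fps_nth (w^n) i * fps_nth (inverse (1 - z) ^ n) (p - i) = fps_nth (w^n) i * (\<Sum>r=0..N. pochhammer (real n) r / fact r * fps_nth (z^r) (p - i))"
      using NB'[OF z0] by simp
  qed
  also have "\<dots> = (\<Sum>r=0..N. pochhammer (real n) r / fact r * (\<Sum>i=0..p. fps_nth (w^n) i * fps_nth (z^r) (p - i)))"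
    by (simp add: sum_distrib_left sum_distrib_right sum.swap[of _ "{0..p}"] algebra_simps)
  also have "\<dots> = (\<Sum>r=0..N. pochhammer (real n) r / fact r * fps_nth (w^n * z^r) p)"
    by (simp add: fps_mult_nth)
  also have "\<dots> = (\<Sum>r=0..N. pochhammer (real n) r / fact r * c^r *
        (if j*r \<le> p then fps_nth (w ^ (n+r)) (p - j*r) else 0))"
  proof (rule sum.cong[OF refl])
    fix r
    have "w^n * z^r = fps_const (c^r) * (fps_X^(j*r) * w^(n+r))"
      unfolding z_def y_def by (simp add: power_mult_distrib fps_const_power power_mult power_add algebra_simps)
    then show "pochhammer (real n) r / fact r * fps_nth (w^n * z^r) p = pochhammer (real n) r / fact r * c^r *
        (if j*r \<le> p then fps_nth (w ^ (n+r)) (p - j*r) else 0)"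
      by (simp add: fps_X_power_mult_nth)
  qed
  finally show ?thesis unfolding y_def w_def .
qed

definition GG :: "(nat \<Rightarrow> real) \<Rightarrow> nat set \<Rightarrow> real fps" where
  "GG c S = (\<Sum>m\<in>S. fps_const (c m) * fps_X^m)"

definition TT :: "(nat \<Rightarrow> real) \<Rightarrow> nat set \<Rightarrow> nat \<Rightarrow> nat \<Rightarrow> (nat \<Rightarrow> nat) \<Rightarrow> real" where
  "TT c S n p k = (if (\<Sum>m\<in>S. m * k m) = p then pochhammer (real n) (\<Sum>m\<in>S. k m) * (\<Prod>m\<in>S. c m ^ k m / fact (k m)) else 0)"

lemma GG0: "finite S \<Longrightarrow> 0 \<notin> S \<Longrightarrow> fps_nth (GG c S) 0 = 0"
  unfolding GG_def fps_sum_nth by (rule sum.neutral) auto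

lemma GG_nth: "finite S \<Longrightarrow> fps_nth (GG c S) i = (if i \<in> S then c i else 0)"
proof -
  assume S: "finite S"
  have "fps_nth (GG c S) i = (\<Sum>m\<in>S. if i = m then c m else 0)"
    unfolding GG_def fps_sum_nth by (intro sum.cong refl) (simp add: fps_X_power_nth)
  also have "\<dots> = (if i \<in> S then c i else 0)" using S by (simp add: sum.delta)
  finally show ?thesis .
qed

lemma LL:
  assumes "finite S" "0 \<notin> S"
  shows "p \<le> N \<Longrightarrow> (\<Sum>k\<in>PiE S (\<lambda>_. {0..N}). TT c S n p k) = fps_nth (inverse (1 - GG c S) ^ n) p"
  using assms
proof (induction S arbitrary: n p rule: finite_induct)
  case empty
  then show ?case by (simp add: TT_def GG_def fps_nth_power_0)
next
  case (insert j S)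
  have j: "j \<ge> 1" and S0: "0 \<notin> S" using insert.prems by auto
  let ?B = "\<lambda>_::nat. {0..N}"
  have "(\<Sum>k\<in>PiE (insert j S) ?B. TT c (insert j S) n p k)
      = (\<Sum>(r, g)\<in>{0..N} \<times> PiE S ?B. TT c (insert j S) n p (g(j := r)))"
    unfolding PiE_insert_eq
    by (subst sum.reindex[OF inj_combinator[OF insert.hyps(2)]]) (simp add: case_prod_unfold)
  also have "\<dots> = (\<Sum>r=0..N. \<Sum>g\<in>PiE S ?B. TT c (insert j S) n p (g(j := r)))"
    by (simp add: sum.cartesian_product)
  also have "\<dots> = (\<Sum>r=0..N. pochhammer (real n) r / fact r * c j ^ r *
        (if j*r \<le> p then fps_nth (inverse (1 - GG c S) ^ (n+r)) (p - j*r) else 0))"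
  proof (rule sum.cong[OF refl])
    fix r
    have t: "TT c (insert j S) n p (g(j := r)) = pochhammer (real n) r / fact r * c j ^ r *
        (if j*r \<le> p then TT c S (n + r) (p - j*r) g else 0)" for g
    proof -
      have s1: "(\<Sum>m\<in>insert j S. m * (g(j := r)) m) = j * r + (\<Sum>m\<in>S. m * g m)"
        using insert.hyps by (simp add: sum.insert) (intro sum.cong, auto)
      have s2: "(\<Sum>m\<in>insert j S. (g(j := r)) m) = r + (\<Sum>m\<in>S. g m)"
        using insert.hyps by (simp add: sum.insert) (intro sum.cong, auto)
      have s3: "(\<Prod>m\<in>insert j S. c m ^ (g(j := r)) m / fact ((g(j := r)) m)) = c j ^ r / fact r * (\<Prod>m\<in>S. c m ^ g m / fact (g m))"
      proof -
        have p: "(\<Prod>m\<in>S. c m ^ (g(j := r)) m / fact ((g(j := r)) m)) = (\<Prod>m\<in>S. c m ^ g m / fact (g m))"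
          using insert.hyps by (intro prod.cong) auto
        show ?thesis by (simp only: prod.insert[OF insert.hyps] p fun_upd_same)
      qed
      have s4: "pochhammer (real n) (r + (\<Sum>m\<in>S. g m)) = pochhammer (real n) r * pochhammer (real (n + r)) (\<Sum>m\<in>S. g m)"
        by (simp add: pochhammer_product')
      show ?thesis unfolding TT_def s1 s2 s3 s4 by auto
    qed
    have "(\<Sum>g\<in>PiE S ?B. TT c (insert j S) n p (g(j := r))) = pochhammer (real n) r / fact r * c j ^ r *
        (if j*r \<le> p then (\<Sum>g\<in>PiE S ?B. TT c S (n + r) (p - j*r) g) else 0)"
      unfolding t by (cases "j*r \<le> p") (simp_all only: if_True if_False sum_distrib_left[symmetric] mult_zero_right sum.neutral_const)
    also have "\<dots> = pochhammer (real n) r / fact r * c j ^ r *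
        (if j*r \<le> p then fps_nth (inverse (1 - GG c S) ^ (n+r)) (p - j*r) else 0)"
      using insert.IH[of "p - j*r" "n + r"] insert.prems S0 by auto
    finally show "(\<Sum>g\<in>PiE S ?B. TT c (insert j S) n p (g(j := r))) = \<dots>" .
  qed
  also have "\<dots> = fps_nth (inverse (1 - GG c S - fps_const (c j) * fps_X^j) ^ n) p"
    by (rule FL[symmetric, OF GG0[OF insert.hyps(1) S0] j insert.prems(1)])
  also have "GG c S + fps_const (c j) * fps_X^j = GG c (insert j S)"
    unfolding GG_def using insert.hyps by (simp add: sum.insert add.commute)
  then have "1 - GG c S - fps_const (c j) * fps_X^j = 1 - GG c (insert j S)"
    by (simp add: algebra_simps)
  finally show ?case by simp
qed



lemma trunc_mult:
  fixes A B C D :: "real fps"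
  assumes "\<forall>i\<le>p. fps_nth A i = fps_nth B i" "\<forall>i\<le>p. fps_nth C i = fps_nth D i" "i \<le> p"
  shows "fps_nth (A * C) i = fps_nth (B * D) i"
  unfolding fps_mult_nth using assms by (intro sum.cong) auto

lemma trunc_pow:
  fixes A B :: "real fps"
  assumes "\<forall>i\<le>p. fps_nth A i = fps_nth B i"
  shows "\<forall>i\<le>p. fps_nth (A^n) i = fps_nth (B^n) i"
proof (induction n)
  case 0 then show ?case by simp
next
  case (Suc n) then show ?case using trunc_mult[OF assms Suc.IH] by simp
qed

lemma trunc_inv:
  fixes A B :: "real fps"
  assumes "\<forall>i\<le>p. fps_nth A i = fps_nth B i" "fps_nth A 0 \<noteq> 0"
  shows "\<forall>i\<le>p. fps_nth (inverse A) i = fps_nth (inverse B) i"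
proof (intro allI impI)
  fix i assume i: "i \<le> p"
  have B0: "fps_nth B 0 \<noteq> 0" using assms by auto
  have a: "\<forall>i\<le>p. fps_nth (inverse B * A) i = fps_nth (1::real fps) i"
  proof (intro allI impI)
    fix i assume "i \<le> p"
    then have "fps_nth (inverse B * A) i = fps_nth (inverse B * B) i"
      using trunc_mult[of p "inverse B" "inverse B" A B i] assms by auto
    then show "fps_nth (inverse B * A) i = fps_nth (1::real fps) i"
      using inverse_mult_eq_1[OF B0] by simp
  qed
  have "inverse B * A * inverse A = inverse B"
    using inverse_mult_eq_1'[OF assms(2)] by (simp add: mult.assoc)
  then have "fps_nth (inverse B) i = fps_nth ((inverse B * A) * inverse A) i" by (rule sym[THEN arg_cong])
  also have "\<dots> = fps_nth (1 * inverse A) i"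
    by (rule trunc_mult[OF a _ i]) simp
  finally show "fps_nth (inverse A) i = fps_nth (inverse B) i" by simp
qed

lemma prod_fact: "p \<le> m \<Longrightarrow> (\<Prod>i<p. real m - real i) = fact m / fact (m - p)"
proof (induction p)
  case 0 then show ?case by simp
next
  case (Suc p)
  have f: "(fact (m - p) :: real) = real (m - p) * fact (m - Suc p)"
    using Suc.prems by (metis Suc_diff_Suc Suc_le_lessD fact_Suc)
  have "(\<Prod>i<Suc p. real m - real i) = fact m / fact (m - p) * (real m - real p)"
    using Suc by simp
  also have "\<dots> = fact m / fact (m - Suc p)" unfolding f using Suc.prems
    by (simp add: of_nat_diff field_simps)
  finally show ?case .
qed

lemma binom_poch: "n \<ge> 1 \<Longrightarrow> real ((n + K - 1) choose K) * fact K = pochhammer (real n) K"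
proof -
  assume n: "n \<ge> 1"
  have "real ((n + K - 1) choose K) = (real (n + K - 1) gchoose K)" by (rule binomial_gbinomial)
  also have "\<dots> = pochhammer (real (n + K - 1) - real K + 1) K / fact K" by (rule gbinomial_pochhammer')
  also have "real (n + K - 1) - real K + 1 = real n" using n by (simp add: of_nat_diff)
  finally show ?thesis by simp
qed



theorem mainTheorem6:
  fixes n p :: nat
  assumes "n \<ge> 1" and "p \<le> n - 1"
  shows "real_of_int (stirling1_signed n (n - p)) =
    fact (n - 1) / fact (n - p - 1) *
    (\<Sum>k\<in>PiE {1..p} (\<lambda>_. {0..p}).
       let K = (\<Sum>m\<in>{1..p}. k m) in
       real ((n + K - 1) choose K) * fact K / (\<Prod>m\<in>{1..p}. fact (k m))
       * (if p = (\<Sum>m\<in>{1..p}. m * k m) then 1 else 0)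
       * (\<Prod>m\<in>{1..p}. (-1 / fact (m + 1)) ^ (k m)))"
proof -
  define c :: "nat \<Rightarrow> real" where "c m = -1 / fact (m + 1)" for m
  have n1: "n \<ge> 1" and pn: "p \<le> n" using assms by auto
  have S: "(\<Sum>k\<in>PiE {1..p} (\<lambda>_. {0..p}).
       let K = (\<Sum>m\<in>{1..p}. k m) in
       real ((n + K - 1) choose K) * fact K / (\<Prod>m\<in>{1..p}. fact (k m))
       * (if p = (\<Sum>m\<in>{1..p}. m * k m) then 1 else 0)
       * (\<Prod>m\<in>{1..p}. (-1 / fact (m + 1)) ^ (k m)))
     = (\<Sum>k\<in>PiE {1..p} (\<lambda>_. {0..p}). TT c {1..p} n p k)"
  proof (rule sum.cong[OF refl])
    fix k :: "nat \<Rightarrow> nat"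
    define K where "K = (\<Sum>m\<in>{1..p}. k m)"
    have pr: "(\<Prod>m\<in>{1..p}. c m ^ k m / fact (k m)) = (\<Prod>m\<in>{1..p}. c m ^ k m) / (\<Prod>m\<in>{1..p}. fact (k m))"
      by (rule prod_dividef)
    show "(let K = (\<Sum>m\<in>{1..p}. k m) in
       real ((n + K - 1) choose K) * fact K / (\<Prod>m\<in>{1..p}. fact (k m))
       * (if p = (\<Sum>m\<in>{1..p}. m * k m) then 1 else 0)
       * (\<Prod>m\<in>{1..p}. (-1 / fact (m + 1)) ^ (k m))) = TT c {1..p} n p k"
      unfolding Let_def TT_def K_def[symmetric] pr binom_poch[OF n1] c_def[symmetric]
      by auto
  qed
  have L: "(\<Sum>k\<in>PiE {1..p} (\<lambda>_. {0..p}). TT c {1..p} n p k) = fps_nth (inverse (1 - GG c {1..p}) ^ n) p"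
    by (rule LL) auto
  have agree: "\<forall>i\<le>p. fps_nth (1 - GG c {1..p}) i = fps_nth EE i"
  proof (intro allI impI)
    fix i assume "i \<le> p"
    then show "fps_nth (1 - GG c {1..p}) i = fps_nth EE i"
      by (cases "i = 0") (auto simp: GG_nth EE_def c_def fps_sub_nth)
  qed
  have T: "fps_nth (inverse (1 - GG c {1..p}) ^ n) p = fps_nth (FF ^ n) p"
  proof -
    have "\<forall>i\<le>p. fps_nth (inverse (1 - GG c {1..p})) i = fps_nth FF i"
      unfolding FF_def by (rule trunc_inv[OF agree]) (simp add: GG0)
    from trunc_pow[OF this] show ?thesis by simp
  qed
  have Q: "QQ n p = fact (n - 1) / fact (n - p - 1) * fps_nth (FF ^ n) p"
  proof -
    have "(\<Prod>i<p. real n - 1 - real i) = (\<Prod>i<p. real (n - 1) - real i)"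
      using n1 by (simp add: of_nat_diff)
    also have "\<dots> = fact (n - 1) / fact (n - 1 - p)" using assms by (intro prod_fact) auto
    finally show ?thesis unfolding QQ_def by (simp add: diff_commute)
  qed
  show ?thesis unfolding S L T stir_QQ[OF n1 pn] Q ..
qed

end
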